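(* For $d>0$ let $\lambda_d(\rho)=\int_{\sinh^{-1}d}^{\rho}\frac{d}{\sqrt{\sinh^2x-d^2}}\,dx$ for $\rho\ge\sinh^{-1}d$, let $\hat\rho(d)=\frac{3}{2}\log d$, and let $\hat h(d)=\lambda_d(\hat\rho(d))$ (defined for $d$ large enough that $\hat\rho(d)\ge\sinh^{-1}d$). Then $\lim_{d\to\infty}\hat h(d)=\frac{\pi}{2}$.
   Context: The function $\lambda_d$ is the generating function of the rotationally symmetric minimal catenoid $\mathcal{C}_d=\{(\rho,\theta,\pm\lambda_d(\rho))\}$ in $\mathbb{H}^2\times\mathbb{R}$ (coordinates: geodesic polar coordinates $(\rho,\theta)$ on $\mathbb{H}^2$ and height $z$), so $2\hat h(d)$ is the height of the compact piece $\mathcal{C}_d\cap(\mathbb{H}^2\times[-\hat h(d),\hat h(d)])$. *)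

theory Defs
  imports "HOL-Analysis.Analysis"
begin

text \<open>Generating function of the catenoid: the (improper at the lower endpoint, but
absolutely convergent) integral of d / sqrt(sinh^2 x - d^2) from arsinh d to rho.\<close>
definition lambda_cat :: "real \<Rightarrow> real \<Rightarrow> real" where
  "lambda_cat d \<rho> = integral {arsinh d..\<rho>} (\<lambda>x. d / sqrt ((sinh x)\<^sup>2 - d\<^sup>2))"

definition rho_hat :: "real \<Rightarrow> real" where
  "rho_hat d = 3 / 2 * ln d"

definition h_hat :: "real \<Rightarrow> real" where
  "h_hat d = lambda_cat d (rho_hat d)"

end

theory Submission
  imports Defs "HOL-Real_Asymp.Real_Asymp"
begin

definition Uf :: "real \<Rightarrow> real \<Rightarrow> real" where
  "Uf d x = arctan (sqrt ((sinh x)\<^sup>2 / d\<^sup>2 - 1))"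

definition hf :: "real \<Rightarrow> real \<Rightarrow> real" where
  "hf d y = Uf d y / (cosh y)\<^sup>2"

definition Pf :: "real \<Rightarrow> real \<Rightarrow> real \<Rightarrow> real" where
  "Pf d a x = sinh x / cosh x * Uf d x - integral {a..x} (hf d)"

lemma cosh_pos': "cosh (x::real) > 0"
  using cosh_real_ge_1[of x] by linarith

lemma Uf_cont: "d > 0 \<Longrightarrow> continuous_on S (Uf d)"
  unfolding Uf_def
  by (intro continuous_intros) auto

lemma hf_cont: "d > 0 \<Longrightarrow> continuous_on S (hf d)"
  unfolding hf_def Uf_def
  by (intro continuous_intros) (auto simp: cosh_pos' dest: sym)

lemma sinh_gt: fixes d x :: real assumes "d > 0" "arsinh d < x" shows "sinh x > d"
proof -
  have "sinh (arsinh d) < sinh x" using assms(2) by (simp only: sinh_real_less_iff sinh_real_le_iff)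
  then show ?thesis by simp
qed

lemma sinh_ge: fixes d x :: real assumes "d > 0" "arsinh d \<le> x" shows "sinh x \<ge> d"
proof -
  have "sinh (arsinh d) \<le> sinh x" using assms(2) by (simp only: sinh_real_less_iff sinh_real_le_iff)
  then show ?thesis by simp
qed

lemma Uf_deriv:
  assumes d: "d > 0" and s: "sinh x > d"
  shows "(Uf d has_real_derivative (d * cosh x / (sinh x * sqrt ((sinh x)\<^sup>2 - d\<^sup>2)))) (at x)"
proof -
  define g where "g = (\<lambda>x. (sinh x)\<^sup>2 / d\<^sup>2 - 1)"
  have q: "g x > 0"
    using d s unfolding g_def by (simp add: field_simps power_strict_mono)
  have pos: "(sinh x)\<^sup>2 - d\<^sup>2 > 0" using d s by (simp add: power_strict_mono)
  define R where "R = sqrt ((sinh x)\<^sup>2 - d\<^sup>2)"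
  have R: "R > 0" using pos unfolding R_def by simp
  have sq: "sqrt (g x) = R / d"
  proof -
    have "g x = ((sinh x)\<^sup>2 - d\<^sup>2) / d\<^sup>2" using d unfolding g_def by (simp add: field_simps)
    then show ?thesis using d unfolding R_def by (simp add: real_sqrt_divide)
  qed
  have g1: "1 + g x = (sinh x)\<^sup>2 / d\<^sup>2" unfolding g_def by simp
  have G: "(g has_real_derivative (2 * sinh x * cosh x / d\<^sup>2)) (at x)"
  proof -
    show ?thesis unfolding g_def
      using d by (auto intro!: derivative_eq_intros simp: power2_eq_square)
  qed
  have W: "((\<lambda>x. sqrt (g x)) has_real_derivative (inverse (sqrt (g x)) / 2 * (2 * sinh x * cosh x / d\<^sup>2))) (at x)"
    by (rule DERIV_chain2[OF DERIV_real_sqrt[OF q] G])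
  have A: "((\<lambda>x. arctan (sqrt (g x))) has_real_derivative
      inverse (1 + (sqrt (g x))\<^sup>2) * (inverse (sqrt (g x)) / 2 * (2 * sinh x * cosh x / d\<^sup>2))) (at x)"
    by (rule DERIV_chain2[OF DERIV_arctan W])
  have e: "inverse (1 + (sqrt (g x))\<^sup>2) * (inverse (sqrt (g x)) / 2 * (2 * sinh x * cosh x / d\<^sup>2))
      = d * cosh x / (sinh x * R)"
  proof -
    have "(sqrt (g x))\<^sup>2 = g x" using q by simp
    then have "inverse (1 + (sqrt (g x))\<^sup>2) * (inverse (sqrt (g x)) / 2 * (2 * sinh x * cosh x / d\<^sup>2))
        = inverse ((sinh x)\<^sup>2 / d\<^sup>2) * (inverse (R / d) / 2 * (2 * sinh x * cosh x / d\<^sup>2))"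
      by (simp only: g1 sq)
    also have "\<dots> = d * cosh x / (sinh x * R)"
      using d R s by (simp add: field_simps power2_eq_square)
    finally show ?thesis .
  qed
  have "Uf d = (\<lambda>x. arctan (sqrt (g x)))" unfolding Uf_def g_def by (rule ext) simp
  then show ?thesis using A unfolding e R_def by simp
qed

lemma main_eq:
  assumes d: "d > 0" and ar: "arsinh d \<le> r"
  shows "lambda_cat d r = sinh r / cosh r * Uf d r - integral {arsinh d..r} (hf d)"
proof -
  define a where "a = arsinh d"
  have ar': "a \<le> r" using ar a_def by simp
  have hc: "continuous_on {a..r} (hf d)" using hf_cont d by blast
  have cont: "continuous_on {a..r} (Pf d a)"
    unfolding Pf_def
    by (intro continuous_intros indefinite_integral_continuous_1 integrable_continuous_interval hc Uf_cont[OF d])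
       (auto simp: cosh_pos' dest: sym)
  have der: "(Pf d a has_vector_derivative (d / sqrt ((sinh x)\<^sup>2 - d\<^sup>2))) (at x)"
    if x: "x \<in> {a<..<r}" for x
  proof -
    have sx: "sinh x > d" using sinh_gt[OF d, of x] x a_def by simp
    have Q: "((\<lambda>u. integral {a..u} (hf d)) has_real_derivative hf d x) (at x)"
    proof -
      have "((\<lambda>u. integral {a..u} (hf d)) has_real_derivative hf d x) (at x within {a..r})"
        using integral_has_real_derivative[OF hc] x by auto
      moreover have "at x within {a..r} = at x"
        using x by (intro at_within_interior) auto
      ultimately show ?thesis by simp
    qed
    have T: "((\<lambda>x. sinh x / cosh x) has_real_derivative 1 / (cosh x)\<^sup>2) (at x)"
    proof -
      have "((\<lambda>x. sinh x / cosh x) has_real_derivative (cosh x * cosh x - sinh x * sinh x) / (cosh x * cosh x)) (at x)"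
        by (rule derivative_eq_intros refl | simp add: cosh_pos')+
      moreover have "cosh x * cosh x - sinh x * sinh x = 1" using cosh_square_eq[of x] by (simp add: power2_eq_square)
      ultimately show ?thesis by (simp add: power2_eq_square)
    qed
    have "(Pf d a has_real_derivative
        (1 / (cosh x)\<^sup>2 * Uf d x
          + (d * cosh x / (sinh x * sqrt ((sinh x)\<^sup>2 - d\<^sup>2))) * (sinh x / cosh x) - hf d x)) (at x)"
      unfolding Pf_def
      by (rule DERIV_diff[OF DERIV_mult[OF T Uf_deriv[OF d sx]] Q])
    moreover have "1 / (cosh x)\<^sup>2 * Uf d x
          + (d * cosh x / (sinh x * sqrt ((sinh x)\<^sup>2 - d\<^sup>2))) * (sinh x / cosh x) - hf d x
        = d / sqrt ((sinh x)\<^sup>2 - d\<^sup>2)"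
    proof -
      have x0: "x \<noteq> 0"
      proof
        assume "x = 0" then show False using sx d by simp
      qed
      then have "sinh x \<noteq> 0" by simp
      moreover note x0
      moreover have "cosh x \<noteq> 0" using cosh_pos'[of x] by simp
      ultimately show ?thesis unfolding hf_def by simp
    qed
    ultimately show ?thesis by (simp add: has_real_derivative_iff_has_vector_derivative)
  qed
  have "((\<lambda>x. d / sqrt ((sinh x)\<^sup>2 - d\<^sup>2)) has_integral (Pf d a r - Pf d a a)) {a..r}"
    by (rule fundamental_theorem_of_calculus_interior[OF ar' cont der])
  moreover have "Pf d a a = 0" unfolding Pf_def Uf_def a_def using d by simp
  ultimately show ?thesis unfolding lambda_cat_def a_def[symmetric] Pf_def by (simp add: integral_unique)
qed

lemma Q_bounds:
  assumes d: "d > 0" and ar: "arsinh d \<le> r"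
  shows "0 \<le> integral {arsinh d..r} (hf d)" "integral {arsinh d..r} (hf d) \<le> pi / 2 * r / (1 + d\<^sup>2)"
proof -
  have int: "hf d integrable_on {arsinh d..r}"
    by (intro integrable_continuous_interval hf_cont d)
  have u0: "Uf d y \<ge> 0" if y: "y \<in> {arsinh d..r}" for y
  proof -
    have sy: "sinh y \<ge> d" using sinh_ge[OF d, of y] y by simp
    have "d\<^sup>2 \<le> (sinh y)\<^sup>2" using sy d by (simp add: power_mono)
    then have "(sinh y)\<^sup>2 / d\<^sup>2 - 1 \<ge> 0" using d by (simp add: field_simps)
    then show ?thesis unfolding Uf_def by simp
  qed
  have nn: "0 \<le> hf d y" if "y \<in> {arsinh d..r}" for y
    unfolding hf_def using u0[OF that] by simp
  show "0 \<le> integral {arsinh d..r} (hf d)"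
    by (rule integral_nonneg[OF int]) (simp add: nn)
  have le: "hf d y \<le> pi / 2 / (1 + d\<^sup>2)" if y: "y \<in> {arsinh d..r}" for y
  proof -
    have sy: "sinh y \<ge> d" using sinh_ge[OF d, of y] y by simp
    have c: "(cosh y)\<^sup>2 \<ge> 1 + d\<^sup>2" using cosh_square_eq[of y] sy d
      by (simp add: power_mono)
    have u: "Uf d y \<le> pi / 2" unfolding Uf_def using arctan_ubound less_imp_le by blast
    have u0: "Uf d y \<ge> 0" using u0 y .
    have "Uf d y / (cosh y)\<^sup>2 \<le> (pi / 2) / (1 + d\<^sup>2)"
      by (rule frac_le) (use u u0 c in \<open>auto intro: add_pos_nonneg\<close>)
    then show ?thesis unfolding hf_def .
  qed
  have "integral {arsinh d..r} (hf d) \<le> integral {arsinh d..r} (\<lambda>_. pi / 2 / (1 + d\<^sup>2))"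
    using le by (intro integral_le[OF int]) auto
  also have "\<dots> = (r - arsinh d) * (pi / 2 / (1 + d\<^sup>2))" using ar by simp
  also have "\<dots> \<le> r * (pi / 2 / (1 + d\<^sup>2))"
  proof -
    have a0: "0 \<le> arsinh d" using arsinh_real_neg_iff[of d] d by linarith
    have "0 \<le> pi / 2 / (1 + d\<^sup>2)" by (intro divide_nonneg_pos) (auto intro: add_pos_nonneg)
    then show ?thesis using a0 by (intro mult_right_mono) auto
  qed
  finally have F: "integral {arsinh d..r} (hf d) \<le> r * (pi / 2 / (1 + d\<^sup>2))" .
  have E: "r * (pi / 2 / (1 + d\<^sup>2)) = pi / 2 * r / (1 + d\<^sup>2)" by simp
  show "integral {arsinh d..r} (hf d) \<le> pi / 2 * r / (1 + d\<^sup>2)" using F E by linarith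
qed

theorem lemma7p2:
  shows "(h_hat \<longlongrightarrow> pi / 2) at_top"
proof -
  define T where "T = (\<lambda>d::real. sinh (rho_hat d) / cosh (rho_hat d) * Uf d (rho_hat d))"
  define Q where "Q = (\<lambda>d::real. integral {arsinh d..rho_hat d} (hf d))"
  have ev0: "\<forall>\<^sub>F d in at_top. arsinh d \<le> rho_hat d"
    unfolding rho_hat_def by real_asymp
  have ev: "\<forall>\<^sub>F d in at_top. d > 0 \<and> arsinh d \<le> rho_hat d"
    using eventually_conj[OF eventually_gt_at_top[of 0] ev0] .
  have eq: "\<forall>\<^sub>F d in at_top. T d - Q d = h_hat d"
    using ev by eventually_elim (simp add: T_def Q_def h_hat_def main_eq)
  have t1: "((\<lambda>d::real. sinh (rho_hat d) / cosh (rho_hat d)) \<longlongrightarrow> 1) at_top"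
    unfolding rho_hat_def by real_asymp
  have t2: "filterlim (\<lambda>d::real. sqrt ((sinh (rho_hat d))\<^sup>2 / d\<^sup>2 - 1)) at_top at_top"
    unfolding rho_hat_def by real_asymp
  have t3: "((\<lambda>d. Uf d (rho_hat d)) \<longlongrightarrow> pi / 2) at_top"
    unfolding Uf_def
    using filterlim_compose[OF tendsto_arctan_at_top t2] by (simp add: o_def)
  have tT: "(T \<longlongrightarrow> pi / 2) at_top"
    unfolding T_def using tendsto_mult[OF t1 t3] by simp
  have tQ: "(Q \<longlongrightarrow> 0) at_top"
  proof (rule tendsto_sandwich[of "\<lambda>_. 0" _ _ "\<lambda>d. pi / 2 * rho_hat d / (1 + d\<^sup>2)"])
    show "\<forall>\<^sub>F d in at_top. 0 \<le> Q d" using ev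
    proof eventually_elim
      case (elim d)
      then show ?case unfolding Q_def using Q_bounds(1)[of d "rho_hat d"] by blast
    qed
    show "\<forall>\<^sub>F d in at_top. Q d \<le> pi / 2 * rho_hat d / (1 + d\<^sup>2)"
      using ev
    proof eventually_elim
      case (elim d)
      then show ?case unfolding Q_def using Q_bounds(2)[of d "rho_hat d"] by blast
    qed
    show "((\<lambda>_. 0) \<longlongrightarrow> (0::real)) at_top" by simp
    show "((\<lambda>d. pi / 2 * rho_hat d / (1 + d\<^sup>2)) \<longlongrightarrow> 0) at_top"
      unfolding rho_hat_def by real_asymp
  qed
  have "((\<lambda>d. T d - Q d) \<longlongrightarrow> pi / 2 - 0) at_top" by (intro tendsto_diff tT tQ)
  then show ?thesis using Lim_transform_eventually[OF _ eq] by simp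
qed

end
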